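(* Let $\Lambda\ge1$ and $\kappa_1=258/\pi$. Then for all $0\le r\le2\Lambda$, $$|U_\Lambda(r)-U(r)|\le\kappa_1\frac{r}{2E(\Lambda)}.$$
   Context: $E(r)=(1+r^2)^{1/2}$. $B_\Lambda=\frac1\pi\int_0^{\Lambda/E(\Lambda)}\frac{z^2-z^4/3}{1-z^2}dz$. For $0\le r\le2\Lambda$, with $Z_\Lambda(r)=(E(\Lambda)-E(\Lambda-r))/r$ (and $Z_\Lambda(0)=\Lambda/E(\Lambda)$), $B_\Lambda(r)=\frac1\pi\int_0^{Z_\Lambda(r)}\frac{z^2-z^4/3}{(1-z^2)(1+r^2(1-z^2)/4)}dz+\frac{r}{2\pi}\int_0^{Z_\Lambda(r)}\frac{z-z^3/3}{E(\Lambda)-rz/2}dz$, and $U_\Lambda(r)=B_\Lambda-B_\Lambda(r)$. $U(r)=\frac{r^2}{4\pi}\int_0^1\frac{z^2-z^4/3}{1+r^2(1-z^2)/4}dz$. *)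

theory Defs
  imports "HOL-Analysis.Analysis"
begin

definition E :: "real \<Rightarrow> real" where
  "E r = sqrt (1 + r^2)"

definition B0 :: "real \<Rightarrow> real" where
  "B0 \<Lambda> = (1/pi) * integral {0..\<Lambda> / E \<Lambda>} (\<lambda>z. (z^2 - z^4/3) / (1 - z^2))"

definition Z :: "real \<Rightarrow> real \<Rightarrow> real" where
  "Z \<Lambda> r = (if r = 0 then \<Lambda> / E \<Lambda> else (E \<Lambda> - E (\<Lambda> - r)) / r)"

definition B :: "real \<Rightarrow> real \<Rightarrow> real" where
  "B \<Lambda> r =
     (1/pi) * integral {0..Z \<Lambda> r}
        (\<lambda>z. (z^2 - z^4/3) / ((1 - z^2) * (1 + r^2 * (1 - z^2) / 4)))
   + (r / (2*pi)) * integral {0..Z \<Lambda> r} (\<lambda>z. (z - z^3/3) / (E \<Lambda> - r*z/2))"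

definition UL :: "real \<Rightarrow> real \<Rightarrow> real" where
  "UL \<Lambda> r = B0 \<Lambda> - B \<Lambda> r"

definition U :: "real \<Rightarrow> real" where
  "U r = (r^2 / (4*pi)) * integral {0..1} (\<lambda>z. (z^2 - z^4/3) / (1 + r^2 * (1 - z^2) / 4))"

end

theory Submission
  imports Defs
begin

lemma num_bounds:
  fixes z :: real assumes "0 \<le> z" "z \<le> 1"
  shows "0 \<le> z^2 - z^4/3" "z^2 - z^4/3 \<le> 1" "z^2 \<le> 1"
proof -
  have z2: "z^2 \<le> 1" using assms by (simp add: power_le_one)
  have "z^4 = z^2 * z^2" by (simp add: power2_eq_square power4_eq_xxxx)
  also have "\<dots> \<le> z^2 * 1" using z2 by (intro mult_left_mono) auto
  finally have "z^4 \<le> z^2" by simp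
  thus "0 \<le> z^2 - z^4/3" using zero_le_power2[of z] by linarith
  have "0 \<le> z^4" by simp
  then show "z^2 - z^4/3 \<le> 1" using z2 by linarith
  show "z^2 \<le> 1" by (fact z2)
qed

lemma num_bounds3:
  fixes z :: real assumes "0 \<le> z" "z \<le> 1"
  shows "0 \<le> z - z^3/3" "z - z^3/3 \<le> 1"
proof -
  have "z^3 \<le> 1" using assms by (simp add: power_le_one)
  have "z^3 = z * z^2" by (simp add: power2_eq_square power3_eq_cube)
  also have "\<dots> \<le> z * 1" using assms by (intro mult_left_mono) (auto simp: power_le_one)
  finally have "z^3 \<le> z" by simp
  thus "0 \<le> z - z^3/3" using assms(1) by linarith
  have "0 \<le> z^3" using assms(1) by simp
  then show "z - z^3/3 \<le> 1" using assms by linarith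
qed

lemma split_id:
  fixes n d r :: real assumes "d \<noteq> 0" "1 + r^2*d/4 \<noteq> 0"
  shows "n/d = n/(d*(1+r^2*d/4)) + r^2/4*(n/(1+r^2*d/4))"
proof -
  define a where "a = 1+r^2*d/4"
  have a0: "a \<noteq> 0" using assms a_def by simp
  have "n/(d*a) + r^2/4*(n/a) = (n + r^2*d/4*n)/(d*a)" using a0 assms(1) by (simp add: field_simps)
  also have "\<dots> = (n * a)/(d*a)" unfolding a_def by (simp add: algebra_simps)
  also have "\<dots> = n/d" using a0 by simp
  finally show ?thesis unfolding a_def by simp
qed

lemma kbound_large:
  fixes z r :: real assumes "0 \<le> z" "z < 1" "r > 0"
  shows "(z^2 - z^4/3)/((1-z^2)*(1+r^2*(1-z^2)/4)) \<le> 4/(r^2*(1-z)^2)"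
proof -
  have n: "0 \<le> z^2 - z^4/3" "z^2 - z^4/3 \<le> 1" "z^2 \<le> 1" using num_bounds[of z] assms by auto
  have d1: "1 - z \<le> 1 - z^2" using assms by (simp add: power2_eq_square mult_left_le_one_le)
  have d0: "0 < 1 - z" using assms by simp
  have sq: "(1-z)^2 \<le> (1-z^2)^2" using d1 d0 by (intro power_mono) auto
  have r2: "r^2 > 0" using assms by simp
  have "r^2*(1-z)^2/4 \<le> r^2*(1-z^2)^2/4" using sq r2 by (intro divide_right_mono mult_left_mono) auto
  also have "\<dots> = (1-z^2) * (r^2*(1-z^2)/4)" by (simp add: power2_eq_square)
  also have "\<dots> \<le> (1-z^2)*(1+r^2*(1-z^2)/4)" using d1 d0 by (intro mult_left_mono) auto
  finally have D: "r^2*(1-z)^2/4 \<le> (1-z^2)*(1+r^2*(1-z^2)/4)" .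
  have pos: "0 < r^2*(1-z)^2/4" using r2 d0 by simp
  have "(z^2 - z^4/3)/((1-z^2)*(1+r^2*(1-z^2)/4)) \<le> 1/(r^2*(1-z)^2/4)"
    using n D pos by (intro frac_le) auto
  also have "\<dots> = 4/(r^2*(1-z)^2)" by simp
  finally show ?thesis .
qed

lemma kbound_small:
  fixes z r c e :: real assumes "0 \<le> z" "z \<le> c" "c < 1" "1 - c^2 = 1/e^2" "e > 0"
  shows "(z^2 - z^4/3)/((1-z^2)*(1+r^2*(1-z^2)/4)) \<le> e^2"
proof -
  have z1: "z \<le> 1" using assms by simp
  have n: "0 \<le> z^2 - z^4/3" "z^2 - z^4/3 \<le> 1" using num_bounds[of z] assms z1 by auto
  have "z^2 \<le> c^2" using assms by (intro power_mono) auto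
  hence d: "1/e^2 \<le> 1 - z^2" using assms(4) by linarith
  have a: "1 \<le> 1+r^2*(1-z^2)/4" using d assms
    by (smt (verit) divide_nonneg_nonneg mult_nonneg_nonneg zero_le_power2 zero_less_power)
  have "1/e^2 \<le> (1-z^2)*(1+r^2*(1-z^2)/4)"
    using d a mult_mono[OF d a] by (smt (verit) mult_cancel_left1 zero_less_divide_1_iff zero_less_power assms(5))
  moreover have "0 < 1/e^2" using assms by simp
  ultimately have "(z^2 - z^4/3)/((1-z^2)*(1+r^2*(1-z^2)/4)) \<le> 1/(1/e^2)"
    using n by (intro frac_le) auto
  thus ?thesis by simp
qed

lemma gbound:
  fixes z r :: real assumes "0 \<le> z" "z \<le> 1"
  shows "0 \<le> (z^2 - z^4/3)/(1+r^2*(1-z^2)/4)" "(z^2 - z^4/3)/(1+r^2*(1-z^2)/4) \<le> 1"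
    "1 \<le> 1+r^2*(1-z^2)/4"
proof -
  have n: "0 \<le> z^2 - z^4/3" "z^2 - z^4/3 \<le> 1" "z^2 \<le> 1" using num_bounds[of z] assms by auto
  show a: "1 \<le> 1+r^2*(1-z^2)/4" using n by simp
  show "0 \<le> (z^2 - z^4/3)/(1+r^2*(1-z^2)/4)" using n a by simp
  have pos: "0 < 1+r^2*(1-z^2)/4" using a by linarith
  have "z^2 - z^4/3 \<le> 1+r^2*(1-z^2)/4" using n a by linarith
  thus "(z^2 - z^4/3)/(1+r^2*(1-z^2)/4) \<le> 1" by (simp add: pos_divide_le_eq[OF pos])
qed

theorem lemma11:
  fixes \<Lambda> r :: real
  assumes "\<Lambda> \<ge> 1" and "0 \<le> r" and "r \<le> 2 * \<Lambda>"
  shows "\<bar>UL \<Lambda> r - U r\<bar> \<le> (258 / pi) * (r / (2 * E \<Lambda>))"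
proof (cases "r = 0")
  case True
  then show ?thesis by (simp add: UL_def B_def B0_def U_def Z_def)
next
  case False
  hence rpos: "r > 0" using assms by auto
  define e where "e = E \<Lambda>"
  define s where "s = \<Lambda> - r"
  define es where "es = E s"
  define c where "c = \<Lambda> / e"
  define ZZ where "ZZ = Z \<Lambda> r"
  have e2: "e^2 = 1 + \<Lambda>^2" and epos: "e > 0" unfolding e_def E_def by (auto simp: add_pos_nonneg)
  have es2: "es^2 = 1 + s^2" and espos: "es > 0" unfolding es_def E_def by (auto simp: add_pos_nonneg)
  have "\<Lambda>^2 < e^2" using e2 by simp
  hence eL: "e > \<Lambda>" using power2_less_imp_less epos less_imp_le by blast
  have "e^2 \<le> (\<Lambda> + 1)^2" using e2 assms(1) by (simp add: power2_eq_square algebra_simps)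
  hence eL1: "e \<le> \<Lambda> + 1" by (rule power2_le_imp_le) (use assms(1) in simp)
  have "\<bar>s\<bar>^2 < es^2" using es2 by simp
  hence es_abs: "es \<ge> \<bar>s\<bar>" using power2_less_imp_less espos less_imp_le by blast
  have abs_s: "\<bar>s\<bar> \<le> \<Lambda>" using assms unfolding s_def by auto
  have es_le: "es \<le> e"
  proof -
    have "\<bar>s\<bar>^2 \<le> \<Lambda>^2" using abs_s by (intro power_mono) auto
    hence "es^2 \<le> e^2" using e2 es2 by simp
    thus ?thesis by (rule power2_le_imp_le) (use epos in simp)
  qed
  have ZZdef: "ZZ = (e - es) / r" unfolding ZZ_def Z_def e_def es_def s_def using False by simp
  have Z0: "0 \<le> ZZ" using ZZdef es_le rpos by simp
  have c01: "0 < c" "c < 1" unfolding c_def using epos eL assms(1) by auto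
  have c2: "1 - c^2 = 1 / e^2"
  proof -
    have "1 - c^2 = (e^2 - \<Lambda>^2) / e^2" unfolding c_def using epos by (simp add: power_divide field_simps)
    also have "\<dots> = 1 / e^2" using e2 by simp
    finally show ?thesis .
  qed
  define M where "M = e * es + e^2 - r * \<Lambda>"
  have Mpos: "M > 0"
  proof (cases "r \<le> \<Lambda>")
    case True
    have "r*\<Lambda> \<le> \<Lambda>*\<Lambda>" using True assms(1) by (intro mult_right_mono) auto
    hence "e^2 - r*\<Lambda> > 0" using e2 by (simp add: power2_eq_square)
    thus ?thesis unfolding M_def using mult_pos_pos[OF epos espos] by linarith
  next
    case False
    have "es \<ge> r - \<Lambda>" using es_abs s_def by auto
    hence "e * es \<ge> \<Lambda> * (r - \<Lambda>)" using eL False assms(1)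
      by (intro mult_mono) auto
    thus ?thesis unfolding M_def using e2 by (simp add: power2_eq_square algebra_simps)
  qed
  have Miden: "(e * es - (e^2 - r*\<Lambda>)) * M = r^2"
  proof -
    have "(e * es - (e^2 - r*\<Lambda>)) * M = e^2 * es^2 - (e^2 - r*\<Lambda>)^2"
      unfolding M_def by (simp add: power2_eq_square algebra_simps)
    also have "\<dots> = r^2" unfolding es2 s_def using e2 by (simp add: power2_eq_square algebra_simps)
    finally show ?thesis .
  qed
  have cZ: "c - ZZ = r / (e * M)"
  proof -
    have "c - ZZ = (e * es - (e^2 - r*\<Lambda>)) / (r * e)"
      unfolding c_def ZZdef using rpos epos by (simp add: field_simps power2_eq_square)
    also have "\<dots> = (r^2 / M) / (r * e)"
    proof -
      have "e * es - (e^2 - r*\<Lambda>) = r^2 / M" using Miden Mpos by (simp add: field_simps)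
      thus ?thesis by simp
    qed
    also have "\<dots> = r / (e * M)" using rpos by (simp add: field_simps power2_eq_square)
    finally show ?thesis .
  qed
  have "0 \<le> r / (e * M)" using rpos epos Mpos by simp
  hence Zc: "ZZ \<le> c" using cZ by linarith
  have eLprod: "(e - \<Lambda>) * (e + \<Lambda>) = 1" using e2 by (simp add: power2_eq_square algebra_simps)
  have onec: "1 - c = 1 / (e * (e + \<Lambda>))"
  proof -
    have "1 - c = (e - \<Lambda>) / e" unfolding c_def using epos by (simp add: field_simps)
    also have "e - \<Lambda> = 1 / (e + \<Lambda>)" using eLprod eL assms(1) by (simp add: field_simps)
    finally show ?thesis by simp
  qed
  define f where "f = (\<lambda>z::real. (z^2 - z^4/3) / (1 - z^2))"
  define k where "k = (\<lambda>z::real. (z^2 - z^4/3) / ((1 - z^2) * (1 + r^2 * (1 - z^2) / 4)))"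
  define g where "g = (\<lambda>z::real. (z^2 - z^4/3) / (1 + r^2 * (1 - z^2) / 4))"
  define h where "h = (\<lambda>z::real. (z - z^3/3) / (e - r*z/2))"
  have B0eq: "B0 \<Lambda> = (1/pi) * integral {0..c} f" unfolding B0_def c_def e_def f_def by simp
  have Beq: "B \<Lambda> r = (1/pi) * integral {0..ZZ} k + (r/(2*pi)) * integral {0..ZZ} h"
    unfolding B_def ZZ_def k_def h_def e_def by simp
  have Ueq: "U r = (r^2/(4*pi)) * integral {0..1} g" unfolding U_def g_def by simp
  have zc: "\<And>z. z \<in> {0..c} \<Longrightarrow> z^2 \<le> c^2 \<and> 0 < 1 - z^2"
  proof -
    fix z assume "z \<in> {0..c}"
    hence "z^2 \<le> c^2" by (intro power_mono) auto
    moreover have "c^2 < 1" using c01 by (simp add: power_less_one_iff)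
    ultimately show "z^2 \<le> c^2 \<and> 0 < 1 - z^2" by simp
  qed
  have ga: "\<And>z. z \<in> {0..1} \<Longrightarrow> 1 \<le> 1 + r^2 * (1 - z^2) / 4"
    using gbound(3) by auto
  have f_int: "f integrable_on {0..c}"
  proof -
    have "\<forall>z\<in>{0..c}. 1 - z^2 \<noteq> 0" using zc by (metis less_irrefl)
    thus ?thesis unfolding f_def by (intro integrable_continuous_interval continuous_intros) auto
  qed
  have k_int: "k integrable_on {0..c}"
  proof -
    have "\<And>z. z \<in> {0..c} \<Longrightarrow> (1 - z^2) * (1 + r^2 * (1 - z^2) / 4) \<noteq> 0"
    proof -
      fix z assume z: "z \<in> {0..c}"
      have z1: "z \<in> {0..1}" using z c01 by auto
      have "0 < 1 - z^2" using zc[OF z] by simp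
      moreover have "1 \<le> 1 + r^2 * (1 - z^2) / 4" using z1 by (rule ga)
      ultimately have "0 < (1 - z^2) * (1 + r^2 * (1 - z^2) / 4)" by (intro mult_pos_pos) linarith+
      thus "(1 - z^2) * (1 + r^2 * (1 - z^2) / 4) \<noteq> 0" by linarith
    qed
    thus ?thesis unfolding k_def by (intro integrable_continuous_interval continuous_intros) auto
  qed
  have g_int: "g integrable_on {0..1}"
  proof -
    have "\<And>z. z \<in> {0..1} \<Longrightarrow> 1 + r^2 * (1 - z^2) / 4 \<noteq> 0" using ga by force
    thus ?thesis unfolding g_def by (intro integrable_continuous_interval continuous_intros) auto
  qed
  have hden: "\<And>z. z \<in> {0..ZZ} \<Longrightarrow> e/2 \<le> e - r*z/2"
  proof -
    fix z assume z: "z \<in> {0..ZZ}"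
    have "r*z \<le> r*ZZ" using z rpos by (intro mult_left_mono) auto
    also have "r*ZZ = e - es" using ZZdef rpos by simp
    finally show "e/2 \<le> e - r*z/2" using espos by simp
  qed
  have h_int: "h integrable_on {0..ZZ}"
  proof -
    have "\<And>z. z \<in> {0..ZZ} \<Longrightarrow> e - r*z/2 \<noteq> 0" using hden epos by force
    thus ?thesis unfolding h_def by (intro integrable_continuous_interval continuous_intros) auto
  qed
  have g_int0c: "g integrable_on {0..c}" by (rule integrable_subinterval_real[OF g_int]) (use c01 in auto)
  have k_intZc: "k integrable_on {ZZ..c}" by (rule integrable_subinterval_real[OF k_int]) (use Z0 in auto)
  have g_intc1: "g integrable_on {c..1}" by (rule integrable_subinterval_real[OF g_int]) (use c01 in auto)
  have fsplit: "integral {0..c} f = integral {0..c} k + (r^2/4) * integral {0..c} g"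
  proof -
    have "integral {0..c} f = integral {0..c} (\<lambda>z. k z + (r^2/4) * g z)"
    proof (rule integral_cong)
      fix z assume z: "z \<in> {0..c}"
      have z1: "z \<in> {0..1}" using z c01 by auto
      have "1 \<le> 1 + r^2 * (1 - z^2) / 4" using z1 by (rule ga)
      hence a: "1 + r^2 * (1 - z^2) / 4 \<noteq> 0" by linarith
      have "1 - z^2 \<noteq> 0" using zc[OF z] by simp
      moreover note a
      ultimately show "f z = k z + (r^2/4) * g z"
        unfolding f_def k_def g_def by (rule split_id)
    qed
    also have "\<dots> = integral {0..c} k + integral {0..c} (\<lambda>z. (r^2/4) * g z)"
      using k_int integrable_on_mult_right[OF g_int0c, of "r^2/4"] by (intro integral_add) auto
    finally show ?thesis by simp
  qed
  have ksplit: "integral {0..ZZ} k + integral {ZZ..c} k = integral {0..c} k"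
    using Z0 Zc k_int by (rule Henstock_Kurzweil_Integration.integral_combine)
  have gsplit: "integral {0..c} g + integral {c..1} g = integral {0..1} g"
    using c01 g_int by (intro Henstock_Kurzweil_Integration.integral_combine) auto
  define A where "A = integral {ZZ..c} k"
  define Bt where "Bt = (r^2/4) * integral {c..1} g"
  define Ct where "Ct = (r/2) * integral {0..ZZ} h"
  have key: "UL \<Lambda> r - U r = (A - Bt - Ct) / pi"
    unfolding UL_def B0eq Beq Ueq A_def Bt_def Ct_def fsplit ksplit[symmetric] gsplit[symmetric]
    by (simp add: field_simps)
  have A0: "0 \<le> A" unfolding A_def
  proof (rule integral_nonneg[OF k_intZc])
    fix z assume z: "z \<in> {ZZ..c}"
    hence z0: "z \<in> {0..c}" using Z0 by auto
    have "z \<le> 1" using z c01 by auto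
    hence n: "0 \<le> z^2 - z^4/3" using num_bounds(1)[of z] z0 by auto
    have "0 < 1 - z^2" using zc[OF z0] by simp
    moreover have "1 \<le> 1 + r^2 * (1 - z^2) / 4" using z0 c01 by (intro ga) auto
    ultimately have "0 < (1 - z^2) * (1 + r^2 * (1 - z^2) / 4)" by (intro mult_pos_pos) linarith+
    thus "0 \<le> k z" unfolding k_def using n by simp
  qed
  have Ig: "0 \<le> integral {c..1} g \<and> integral {c..1} g \<le> 1 - c"
  proof
    show "0 \<le> integral {c..1} g"
      by (rule integral_nonneg[OF g_intc1]) (use c01 in \<open>auto simp: g_def intro: gbound(1)\<close>)
    have "integral {c..1} g \<le> integral {c..1} (\<lambda>_. 1::real)"
      by (rule integral_le[OF g_intc1]) (use c01 in \<open>auto simp: g_def intro: gbound(2)\<close>)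
    also have "\<dots> = 1 - c" using c01 by simp
    finally show "integral {c..1} g \<le> 1 - c" .
  qed
  have Bt0: "0 \<le> Bt" unfolding Bt_def using Ig by simp
  have BtU: "Bt \<le> r / (2*e)"
  proof -
    have "Bt \<le> (r^2/4) * (1 - c)" unfolding Bt_def using Ig by (intro mult_left_mono) auto
    also have "\<dots> = (r/(2*e)) * (r / (2*(e+\<Lambda>)))" unfolding onec by (simp add: power2_eq_square field_simps)
    also have "\<dots> \<le> (r/(2*e)) * 1"
    proof (intro mult_left_mono)
      show "r / (2*(e+\<Lambda>)) \<le> 1" using assms eL by (simp add: divide_le_eq)
      show "0 \<le> r/(2*e)" using rpos epos by simp
    qed
    finally show ?thesis by simp
  qed
  have Ih: "0 \<le> integral {0..ZZ} h \<and> integral {0..ZZ} h \<le> 2/e"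
  proof -
    have hb: "0 \<le> h z \<and> h z \<le> 2/e" if z: "z \<in> {0..ZZ}" for z
    proof -
      have z1: "0 \<le> z" "z \<le> 1" using z Zc c01 by auto
      have d: "e/2 \<le> e - r*z/2" using hden[OF z] .
      have dp: "0 < e/2" using epos by simp
      have "h z \<le> 1/(e/2)" unfolding h_def
        using num_bounds3[OF z1] d dp by (intro frac_le) auto
      moreover have "0 \<le> h z" unfolding h_def using num_bounds3[OF z1] d dp by simp
      ultimately show ?thesis by simp
    qed
    have "0 \<le> integral {0..ZZ} h" by (rule integral_nonneg[OF h_int]) (use hb in auto)
    moreover have "integral {0..ZZ} h \<le> integral {0..ZZ} (\<lambda>_. 2/e)"
      by (rule integral_le[OF h_int]) (use hb in auto)
    moreover have "integral {0..ZZ} (\<lambda>_. 2/e) = ZZ * (2/e)" using Z0 by simp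
    moreover have "ZZ * (2/e) \<le> 1 * (2/e)" using Zc c01 epos by (intro mult_right_mono) auto
    ultimately show ?thesis by linarith
  qed
  have Ct0: "0 \<le> Ct" unfolding Ct_def using Ih rpos by simp
  have CtU: "Ct \<le> r / e"
  proof -
    have "Ct \<le> (r/2) * (2/e)" unfolding Ct_def using Ih rpos by (intro mult_left_mono) auto
    thus ?thesis by simp
  qed
  have AU: "A \<le> 129 * r / e"
  proof (cases "r \<le> e/2")
    case True
    have "A \<le> integral {ZZ..c} (\<lambda>_. e^2)" unfolding A_def
    proof (rule integral_le[OF k_intZc])
      fix z assume z: "z \<in> {ZZ..c}"
      show "k z \<le> e^2" unfolding k_def using z Z0 c01 c2 epos by (intro kbound_small) auto
    qed auto
    also have "\<dots> = (c - ZZ) * e^2" using Zc by simp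
    also have "\<dots> = r * e / M" unfolding cZ using epos Mpos by (simp add: power2_eq_square field_simps)
    also have "\<dots> \<le> r * e / (e^2/2)"
    proof (intro divide_left_mono)
      have "r * \<Lambda> \<le> (e/2) * e" using True eL rpos assms(1) by (intro mult_mono) auto
      hence "e^2/2 \<le> e^2 - r*\<Lambda>" by (simp add: power2_eq_square)
      thus "e^2/2 \<le> M" unfolding M_def using mult_pos_pos[OF epos espos] by linarith
      show "0 \<le> r * e" using rpos epos by simp
      show "0 < M * (e^2/2)" using Mpos epos by simp
    qed
    also have "\<dots> = 2 * r / e" using epos by (simp add: power2_eq_square field_simps)
    also have "\<dots> \<le> 129 * r / e" using rpos epos by (simp add: divide_right_mono)
    finally show ?thesis .
  next
    case False
    define F where "F = (\<lambda>z::real. (4 / r^2) * inverse (1 - z))"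
    have deriv: "((\<lambda>z. 4/(r^2*(1-z)^2)) has_integral (F c - F ZZ)) {ZZ..c}"
    proof (rule fundamental_theorem_of_calculus[OF Zc])
      fix z assume z: "z \<in> {ZZ..c}"
      hence z1: "1 - z \<noteq> 0" using c01 by auto
      have d1: "((\<lambda>z. 1 - z) has_real_derivative -1) (at z within {ZZ..c})"
        by (auto intro!: derivative_eq_intros)
      have "(F has_real_derivative (4/r^2) * (- (-1 * inverse((1-z) ^ Suc (Suc 0)))))
          (at z within {ZZ..c})"
        unfolding F_def by (intro DERIV_cmult DERIV_inverse_fun d1 z1)
      moreover have "(4/r^2) * (- (-1 * inverse((1-z) ^ Suc (Suc 0)))) = 4/(r^2*(1-z)^2)"
        by (simp add: power2_eq_square field_simps)
      ultimately have "(F has_real_derivative 4/(r^2*(1-z)^2)) (at z within {ZZ..c})" by simp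
      thus "(F has_vector_derivative 4/(r^2*(1-z)^2)) (at z within {ZZ..c})"
        by (simp add: has_real_derivative_iff_has_vector_derivative)
    qed
    have "A \<le> integral {ZZ..c} (\<lambda>z. 4/(r^2*(1-z)^2))" unfolding A_def
    proof (rule integral_le[OF k_intZc])
      show "(\<lambda>z. 4/(r^2*(1-z)^2)) integrable_on {ZZ..c}" using deriv by blast
      fix z assume z: "z \<in> {ZZ..c}"
      show "k z \<le> 4/(r^2*(1-z)^2)" unfolding k_def using z Z0 c01 rpos by (intro kbound_large) auto
    qed
    also have "\<dots> = F c - F ZZ" using deriv by (rule integral_unique)
    also have "\<dots> \<le> F c" unfolding F_def using Zc c01 rpos by simp
    also have "F c = 4 * (e * (e + \<Lambda>)) / r^2" unfolding F_def onec by simp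
    also have "\<dots> \<le> 4 * (e * (2*e)) / r^2" using eL epos rpos by (intro divide_right_mono mult_left_mono) auto
    also have "\<dots> = 8 * e^2 / r^2" by (simp add: power2_eq_square)
    also have "\<dots> \<le> 8 * e^2 / (e^2/4)"
    proof (intro divide_left_mono)
      have "e/2 \<le> r" using False by simp
      hence "(e/2)^2 \<le> r^2" using epos by (intro power_mono) auto
      thus "e^2/4 \<le> r^2" by (simp add: power_divide)
      show "0 \<le> 8 * e^2" by simp
      show "0 < r^2 * (e^2/4)" using rpos epos by simp
    qed
    also have "\<dots> = 32" using epos by simp
    also have "\<dots> \<le> 129 * r / e"
    proof -
      have "e/2 \<le> r" using False by simp
      hence "129 * (e/2) \<le> 129 * r" by simp
      hence "129 * (e/2) / e \<le> 129 * r / e" using epos by (intro divide_right_mono) auto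
      moreover have "129 * (e/2) / e = 64.5" using epos by simp
      ultimately show ?thesis by simp
    qed
    finally show ?thesis .
  qed
  have BC: "Bt + Ct \<le> 129 * r / e"
  proof -
    have "r/(2*e) + r/e \<le> 129 * r / e" using rpos epos by (simp add: field_simps)
    thus ?thesis using BtU CtU by linarith
  qed
  have main: "\<bar>A - Bt - Ct\<bar> \<le> 129 * r / e" using A0 AU Bt0 Ct0 BC by linarith
  have "\<bar>UL \<Lambda> r - U r\<bar> = \<bar>A - Bt - Ct\<bar> / pi" unfolding key by simp
  also have "\<dots> \<le> (129 * r / e) / pi" using main by (intro divide_right_mono) auto
  also have "\<dots> = (258 / pi) * (r / (2 * E \<Lambda>))" unfolding e_def by simp
  finally show ?thesis .
qed

end
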